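(* Every star-like hereditary family is finitely generated; that is, if $\mathcal{F}$ is a star-like hereditary family then there is a finite set of graphs $\mathcal{H}$ with $\mathcal{F}=\operatorname{Forb}(\mathcal{H})$.
   Context: Graphs are finite and simple. A family is hereditary if closed under isomorphism and induced subgraphs. $\operatorname{Forb}(\mathcal{H})$ is the family of graphs with no induced subgraph isomorphic to a member of $\mathcal{H}$. A set $X\subseteq V(G)$ is a crown of $G$ if every $v\in V(G)$ is adjacent either to all vertices of $X\setminus\{v\}$ or to none of them; $S\subseteq V(G)$ is a core if $V(G)\setminus S$ is a crown; $G$ is an $s$-star if it has a core of size at most $s$. A hereditary family is $s$-star-like if there exists $n_0$ such that every graph in it with at least $n_0$ vertices is an $s$-star, and star-like if it is $s$-star-like for some integer $s\ge0$. *)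

theory Defs
  imports Main
begin

type_synonym graph = "nat set \<times> (nat \<times> nat) set"

definition verts :: "graph \<Rightarrow> nat set" where "verts G = fst G"
definition edges :: "graph \<Rightarrow> (nat \<times> nat) set" where "edges G = snd G"

definition is_graph :: "graph \<Rightarrow> bool" where
  "is_graph G \<longleftrightarrow> finite (verts G) \<and> edges G \<subseteq> verts G \<times> verts G
     \<and> sym (edges G) \<and> irrefl (edges G)"

definition graph_iso :: "graph \<Rightarrow> graph \<Rightarrow> bool" where
  "graph_iso G H \<longleftrightarrow> (\<exists>f. bij_betw f (verts G) (verts H) \<and>
     (\<forall>u\<in>verts G. \<forall>v\<in>verts G. (u, v) \<in> edges G \<longleftrightarrow> (f u, f v) \<in> edges H))"

definition induced :: "graph \<Rightarrow> nat set \<Rightarrow> graph" where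
  "induced G S = (S, edges G \<inter> (S \<times> S))"

definition has_induced :: "graph \<Rightarrow> graph \<Rightarrow> bool" where
  "has_induced G H \<longleftrightarrow> (\<exists>S \<subseteq> verts G. graph_iso H (induced G S))"

definition hereditary :: "graph set \<Rightarrow> bool" where
  "hereditary F \<longleftrightarrow> (\<forall>G\<in>F. is_graph G)
     \<and> (\<forall>G\<in>F. \<forall>H. is_graph H \<and> graph_iso G H \<longrightarrow> H \<in> F)
     \<and> (\<forall>G\<in>F. \<forall>S \<subseteq> verts G. induced G S \<in> F)"

definition Forb :: "graph set \<Rightarrow> graph set" where
  "Forb \<H> = {G. is_graph G \<and> \<not> (\<exists>H\<in>\<H>. has_induced G H)}"

definition crown :: "graph \<Rightarrow> nat set \<Rightarrow> bool" where
  "crown G X \<longleftrightarrow> X \<subseteq> verts G \<and> (\<forall>v\<in>verts G.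
     (\<forall>x\<in>X - {v}. (v, x) \<in> edges G) \<or> (\<forall>x\<in>X - {v}. (v, x) \<notin> edges G))"

definition core :: "graph \<Rightarrow> nat set \<Rightarrow> bool" where
  "core G S \<longleftrightarrow> S \<subseteq> verts G \<and> crown G (verts G - S)"

definition s_star :: "nat \<Rightarrow> graph \<Rightarrow> bool" where
  "s_star s G \<longleftrightarrow> (\<exists>S. core G S \<and> card S \<le> s)"

definition s_star_like :: "nat \<Rightarrow> graph set \<Rightarrow> bool" where
  "s_star_like s F \<longleftrightarrow> (\<exists>n0. \<forall>G\<in>F. card (verts G) \<ge> n0 \<longrightarrow> s_star s G)"

definition star_like :: "graph set \<Rightarrow> bool" where
  "star_like F \<longleftrightarrow> (\<exists>s. s_star_like s F)"

end

theory Submission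
  imports Defs
begin

lemma verts_induced[simp]: "verts (induced G S) = S"
  by (simp add: induced_def verts_def)
lemma edges_induced[simp]: "edges (induced G S) = edges G \<inter> (S \<times> S)"
  by (simp add: induced_def edges_def)

lemma induced_induced[simp]: "S' \<subseteq> S \<Longrightarrow> induced (induced G S) S' = induced G S'"
  by (auto simp: induced_def edges_def)

lemma induced_self: "is_graph G \<Longrightarrow> induced G (verts G) = G"
  by (cases G) (auto simp: induced_def is_graph_def edges_def verts_def)

lemma is_graph_induced: "is_graph G \<Longrightarrow> S \<subseteq> verts G \<Longrightarrow> is_graph (induced G S)"
  unfolding is_graph_def by (auto simp: sym_def irrefl_def intro: finite_subset)

lemma graph_iso_sym: assumes "graph_iso G H" shows "graph_iso H G"
proof -
  obtain f where f: "bij_betw f (verts G) (verts H)"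
    "\<forall>u\<in>verts G. \<forall>v\<in>verts G. (u, v) \<in> edges G \<longleftrightarrow> (f u, f v) \<in> edges H"
    using assms unfolding graph_iso_def by blast
  let ?g = "the_inv_into (verts G) f"
  have g: "bij_betw ?g (verts H) (verts G)" using f(1) by (rule bij_betw_the_inv_into)
  have "\<forall>u\<in>verts H. \<forall>v\<in>verts H. (u, v) \<in> edges H \<longleftrightarrow> (?g u, ?g v) \<in> edges G"
  proof (intro ballI)
    fix u v assume u: "u \<in> verts H" and v: "v \<in> verts H"
    have "?g u \<in> verts G" "?g v \<in> verts G" using g u v by (auto simp: bij_betw_def)
    moreover have "f (?g u) = u" "f (?g v) = v" using f(1) u v
      by (auto simp: bij_betw_def f_the_inv_into_f)
    ultimately show "(u, v) \<in> edges H \<longleftrightarrow> (?g u, ?g v) \<in> edges G" using f(2) by metis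
  qed
  then show ?thesis using g unfolding graph_iso_def by blast
qed

lemma closure: "hereditary F \<Longrightarrow> H \<in> F \<Longrightarrow> graph_iso H G \<Longrightarrow> is_graph G \<Longrightarrow> G \<in> F"
  unfolding hereditary_def by blast

lemma iso_induced:
  assumes "graph_iso G H" "S \<subseteq> verts G" "finite (verts G)"
  shows "\<exists>S'. S' \<subseteq> verts H \<and> card S' = card S \<and> card (verts H) = card (verts G)
     \<and> graph_iso (induced G S) (induced H S')"
proof -
  obtain f where f: "bij_betw f (verts G) (verts H)"
    "\<forall>u\<in>verts G. \<forall>v\<in>verts G. (u, v) \<in> edges G \<longleftrightarrow> (f u, f v) \<in> edges H"
    using assms unfolding graph_iso_def by blast
  have b: "bij_betw f S (f ` S)" using f(1) assms(2) bij_betw_subset by blast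
  have "graph_iso (induced G S) (induced H (f ` S))"
    unfolding graph_iso_def using b f(2) assms(2) by (auto intro!: exI[of _ f])
  moreover have "card (f ` S) = card S" using b bij_betw_same_card by metis
  moreover have "card (verts H) = card (verts G)" using f(1) bij_betw_same_card by metis
  moreover have "f ` S \<subseteq> verts H" using f(1) assms(2) by (auto simp: bij_betw_def)
  ultimately show ?thesis by blast
qed

lemma relabel:
  assumes "is_graph M" "card (verts M) \<le> N"
  shows "\<exists>H. is_graph H \<and> verts H \<subseteq> {0..<N} \<and> graph_iso H M"
proof -
  let ?n = "card (verts M)"
  have fin: "finite (verts M)" using assms(1) by (simp add: is_graph_def)
  obtain g where g: "bij_betw g {0..<?n} (verts M)" using ex_bij_betw_nat_finite[OF fin] by blast
  define H where "H = ({0..<?n}, {(i,j). i < ?n \<and> j < ?n \<and> (g i, g j) \<in> edges M})"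
  have "is_graph H" using assms(1) unfolding H_def is_graph_def verts_def edges_def
    by (auto simp: sym_def irrefl_def)
  moreover have "verts H \<subseteq> {0..<N}" using assms(2) by (auto simp: H_def verts_def)
  moreover have "graph_iso H M" unfolding graph_iso_def H_def verts_def edges_def
    using g by (auto simp: verts_def intro!: exI[of _ g])
  ultimately show ?thesis by blast
qed


lemma crown_exists:
  assumes g: "is_graph M"
    and min: "\<forall>S. S \<subseteq> verts M \<and> S \<noteq> verts M \<longrightarrow> induced M S \<in> F"
    and st: "\<forall>G\<in>F. n0 \<le> card (verts G) \<longrightarrow> s_star s G"
    and c: "card (verts M) \<ge> n0 + 2"
  shows "\<exists>T \<subseteq> verts M. crown M T \<and> card (verts M - T) \<le> 2*s+2"
proof -
  define V where "V = verts M"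
  define E where "E = edges M"
  have fin: "finite V" using g by (simp add: is_graph_def V_def)
  have "V \<noteq> {}" using c fin V_def by auto
  then obtain v1 where v1: "v1 \<in> V" by blast
  have "card (V - {v1}) \<ge> 1" using c fin v1 V_def by simp
  then have "V - {v1} \<noteq> {}" by (metis card.empty not_one_le_zero)
  then obtain v2 where v2: "v2 \<in> V" "v2 \<noteq> v1" by blast
  have sub: "\<exists>S. core (induced M (V - {v})) S \<and> card S \<le> s" if "v \<in> V" for v
  proof -
    have "induced M (V - {v}) \<in> F" using min that V_def by auto
    moreover have "card (verts (induced M (V - {v}))) \<ge> n0" using c fin that V_def by simp
    ultimately show ?thesis using st s_star_def by blast
  qed
  obtain S1 where S1: "core (induced M (V - {v1})) S1" "card S1 \<le> s" using sub v1 by blast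
  obtain S2 where S2: "core (induced M (V - {v2})) S2" "card S2 \<le> s" using sub v2 by blast
  define T where "T = (V - {v1} - S1) \<inter> (V - {v2} - S2)"
  have cr1: "\<forall>w\<in>V-{v1}. (\<forall>x\<in>(V - {v1} - S1) - {w}. (w, x) \<in> E) \<or> (\<forall>x\<in>(V - {v1} - S1) - {w}. (w, x) \<notin> E)"
    using S1(1) unfolding core_def crown_def E_def by auto
  have cr2: "\<forall>w\<in>V-{v2}. (\<forall>x\<in>(V - {v2} - S2) - {w}. (w, x) \<in> E) \<or> (\<forall>x\<in>(V - {v2} - S2) - {w}. (w, x) \<notin> E)"
    using S2(1) unfolding core_def crown_def E_def by auto
  have "crown M T"
    unfolding crown_def
  proof (intro conjI ballI)
    show "T \<subseteq> verts M" by (auto simp: T_def V_def)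
  next
    fix w assume w: "w \<in> verts M"
    show "(\<forall>x\<in>T - {w}. (w, x) \<in> edges M) \<or> (\<forall>x\<in>T - {w}. (w, x) \<notin> edges M)"
    proof (cases "w = v1")
      case False
      then have "w \<in> V - {v1}" using w V_def by auto
      then show ?thesis using cr1 unfolding T_def E_def by blast
    next
      case True
      then have "w \<in> V - {v2}" using w V_def v2 by auto
      then show ?thesis using cr2 unfolding T_def E_def by blast
    qed
  qed
  moreover have "card (V - T) \<le> 2*s+2"
  proof -
    have fS1: "finite S1" using S1(1) fin unfolding core_def by (auto intro: finite_subset)
    have fS2: "finite S2" using S2(1) fin unfolding core_def by (auto intro: finite_subset)
    have "V - T \<subseteq> ({v1, v2} \<union> S1) \<union> S2" by (auto simp: T_def)
    then have "card (V - T) \<le> card (({v1, v2} \<union> S1) \<union> S2)"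
      using fS1 fS2 by (intro card_mono) auto
    also have "\<dots> \<le> card ({v1, v2} \<union> S1) + card S2" by (rule card_Un_le)
    also have "\<dots> \<le> card {v1, v2} + card S1 + card S2" using card_Un_le[of "{v1, v2}" S1] by linarith
    also have "\<dots> \<le> 2 + s + s" using S1(2) S2(2) v2(2) by simp
    finally show ?thesis by simp
  qed
  moreover have "T \<subseteq> verts M" by (auto simp: T_def V_def)
  ultimately show ?thesis unfolding V_def by blast
qed

definition gr :: "nat \<Rightarrow> nat set \<Rightarrow> (nat \<times> nat) set \<Rightarrow> nat set \<Rightarrow> bool \<Rightarrow> nat \<Rightarrow> graph" where
  "gr B Vc Ec P b k = (Vc \<union> {B..<B+k}, Ec \<union> (P \<times> {B..<B+k}) \<union> ({B..<B+k} \<times> P)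
      \<union> {(x,y). b \<and> x \<in> {B..<B+k} \<and> y \<in> {B..<B+k} \<and> x \<noteq> y})"

lemma verts_gr: "verts (gr B Vc Ec P b k) = Vc \<union> {B..<B+k}"
  by (simp add: gr_def verts_def)

lemma induced_gr:
  assumes "Vc \<subseteq> {..<B}" "Ec \<subseteq> Vc \<times> Vc" "P \<subseteq> Vc" "j \<le> k"
  shows "induced (gr B Vc Ec P b k) (Vc \<union> {B..<B+j}) = gr B Vc Ec P b j"
  using assms unfolding induced_def gr_def edges_def by fastforce

lemma is_graph_gr:
  assumes "finite Vc" "Vc \<subseteq> {..<B}" "Ec \<subseteq> Vc \<times> Vc" "P \<subseteq> Vc" "sym Ec" "irrefl Ec"
  shows "is_graph (gr B Vc Ec P b k)"
  using assms unfolding is_graph_def gr_def edges_def verts_def sym_def irrefl_def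
  by fastforce


lemma canon:
  assumes g: "is_graph M" and cr: "crown M T" and TV: "T \<subseteq> verts M" and Tne: "T \<noteq> {}"
    and cB: "card (verts M - T) \<le> B"
  shows "\<exists>Vc Ec P b. finite Vc \<and> Vc \<subseteq> {..<B} \<and> Ec \<subseteq> Vc \<times> Vc \<and> P \<subseteq> Vc \<and> sym Ec
     \<and> irrefl Ec \<and> graph_iso (gr B Vc Ec P b (card T)) M"
proof -
  define V where "V = verts M"
  define E where "E = edges M"
  define C where "C = V - T"
  define c where "c = card C"
  define k where "k = card T"
  have fin: "finite V" using g by (simp add: is_graph_def V_def)
  have symE: "sym E" and irrE: "irrefl E" using g by (auto simp: is_graph_def E_def)
  have cr': "\<forall>w\<in>V. (\<forall>x\<in>T - {w}. (w, x) \<in> E) \<or> (\<forall>x\<in>T - {w}. (w, x) \<notin> E)"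
    using cr unfolding crown_def V_def E_def by blast
  have crC: "\<forall>w\<in>C. (\<forall>x\<in>T. (w, x) \<in> E) \<or> (\<forall>x\<in>T. (w, x) \<notin> E)"
  proof
    fix w assume "w \<in> C"
    then have "w \<in> V" "T - {w} = T" by (auto simp: C_def)
    then show "(\<forall>x\<in>T. (w, x) \<in> E) \<or> (\<forall>x\<in>T. (w, x) \<notin> E)" using cr' by metis
  qed
  define b where "b = (\<forall>x\<in>T. \<forall>y\<in>T. x \<noteq> y \<longrightarrow> (x, y) \<in> E)"
  have stab: "\<forall>x\<in>T. \<forall>y\<in>T. (x, y) \<notin> E" if nb: "\<not> b"
  proof (rule ccontr)
    assume "\<not> (\<forall>x\<in>T. \<forall>y\<in>T. (x, y) \<notin> E)"
    then obtain x y where xy: "x \<in> T" "y \<in> T" "(x, y) \<in> E" by blast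
    have xny: "x \<noteq> y" using xy irrE by (auto simp: irrefl_def)
    have xall: "\<forall>z\<in>T - {x}. (x, z) \<in> E" using cr' xy TV xny V_def by blast
    have b
      unfolding b_def
    proof (intro ballI impI)
      fix a a' assume a: "a \<in> T" "a' \<in> T" "a \<noteq> a'"
      show "(a, a') \<in> E"
      proof (cases "a = x")
        case True then show ?thesis using xall a by auto
      next
        case False
        then have "(x, a) \<in> E" using xall a by auto
        then have "(a, x) \<in> E" using symE by (auto simp: sym_def)
        then have "\<forall>z\<in>T - {a}. (a, z) \<in> E" using cr' a TV xy False V_def by blast
        then show ?thesis using a by auto
      qed
    qed
    then show False using nb by simp
  qed
  have Tedge: "(x, y) \<in> E \<longleftrightarrow> b \<and> x \<noteq> y" if "x \<in> T" "y \<in> T" for x y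
    using that stab irrE unfolding b_def by (auto simp: irrefl_def)
  have finC: "finite C" using fin by (simp add: C_def)
  have finT: "finite T" using fin TV V_def finite_subset by blast
  obtain gg where gg: "bij_betw gg {0..<c} C" using ex_bij_betw_nat_finite[OF finC] c_def by blast
  obtain h where h: "bij_betw h {0..<k} T" using ex_bij_betw_nat_finite[OF finT] k_def by blast
  have cleB: "c \<le> B" using cB by (simp add: c_def C_def V_def)
  define Vc where "Vc = {0..<c}"
  define Ec where "Ec = {(i,j). i < c \<and> j < c \<and> (gg i, gg j) \<in> E}"
  define P where "P = {i. i < c \<and> (\<forall>t\<in>T. (gg i, t) \<in> E)}"
  define f where "f = (\<lambda>i. if i < B then gg i else h (i - B))"
  have bij1: "bij_betw f Vc C"
    using gg cleB by (auto simp: Vc_def f_def intro: bij_betw_cong[THEN iffD1, OF _ gg])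
  have sh: "bij_betw (\<lambda>i. i - B) {B..<B+k} {0..<k}"
  proof -
    have "(\<lambda>i. i - B) ` {B..<B+k} = {0..<k}"
      by (auto simp: image_iff intro!: bexI[where x="_ + B"])
    moreover have "inj_on (\<lambda>i. i - B) {B..<B+k}" by (auto simp: inj_on_def)
    ultimately show ?thesis by (simp add: bij_betw_def)
  qed
  have bij2: "bij_betw f {B..<B+k} T"
  proof -
    have "bij_betw (h \<circ> (\<lambda>i. i - B)) {B..<B+k} T" using bij_betw_trans[OF sh h] .
    then show ?thesis by (rule bij_betw_cong[THEN iffD1, rotated]) (auto simp: f_def)
  qed
  have "C \<inter> T = {}" by (auto simp: C_def)
  then have bij: "bij_betw f (Vc \<union> {B..<B+k}) V"
    using bij_betw_combine[OF bij1 bij2] TV by (simp add: C_def V_def sup.absorb1)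
  have fV: "f u \<in> C" if "u \<in> Vc" for u using bij1 that by (auto simp: bij_betw_def)
  have fT: "f u \<in> T" if "u \<in> {B..<B+k}" for u using bij2 that by (auto simp: bij_betw_def)
  have fgg: "f u = gg u" if "u \<in> Vc" for u using that cleB by (auto simp: f_def Vc_def)
  have injf: "inj_on f {B..<B+k}" using bij2 by (auto simp: bij_betw_def)
  have edges_ok: "(u, v) \<in> edges (gr B Vc Ec P b k) \<longleftrightarrow> (f u, f v) \<in> E"
    if u: "u \<in> Vc \<union> {B..<B+k}" and v: "v \<in> Vc \<union> {B..<B+k}" for u v
  proof -
    have e: "edges (gr B Vc Ec P b k) = Ec \<union> (P \<times> {B..<B+k}) \<union> ({B..<B+k} \<times> P)
      \<union> {(x,y). b \<and> x \<in> {B..<B+k} \<and> y \<in> {B..<B+k} \<and> x \<noteq> y}"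
      by (simp add: gr_def edges_def)
    have VcB: "x < B" if "x \<in> Vc" for x using that cleB by (auto simp: Vc_def)
    consider "u \<in> Vc" "v \<in> Vc" | "u \<in> Vc" "v \<in> {B..<B+k}" | "u \<in> {B..<B+k}" "v \<in> Vc"
      | "u \<in> {B..<B+k}" "v \<in> {B..<B+k}" using u v by blast
    then show ?thesis
    proof cases
      case 1
      then show ?thesis using VcB[of u] VcB[of v] fgg[of u] fgg[of v]
        unfolding e by (auto simp: Ec_def Vc_def P_def)
    next
      case 2
      have "f u \<in> C" "f v \<in> T" using 2 fV fT by auto
      then have "(f u, f v) \<in> E \<longleftrightarrow> (\<forall>t\<in>T. (f u, t) \<in> E)" using crC by blast
      then show ?thesis using 2 VcB[of u] fgg[of u] cleB
        unfolding e by (auto simp: Ec_def Vc_def P_def)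
    next
      case 3
      have "f v \<in> C" "f u \<in> T" using 3 fV fT by auto
      then have "(f v, f u) \<in> E \<longleftrightarrow> (\<forall>t\<in>T. (f v, t) \<in> E)" using crC by blast
      moreover have "(f u, f v) \<in> E \<longleftrightarrow> (f v, f u) \<in> E" using symE by (auto simp: sym_def)
      ultimately show ?thesis using 3 VcB[of v] fgg[of v] cleB
        unfolding e by (auto simp: Ec_def Vc_def P_def)
    next
      case 4
      have "f u \<in> T" "f v \<in> T" using 4 fT by auto
      then have "(f u, f v) \<in> E \<longleftrightarrow> b \<and> f u \<noteq> f v" using Tedge by blast
      moreover have "f u = f v \<longleftrightarrow> u = v" using injf 4 by (auto simp: inj_on_def)
      ultimately show ?thesis using 4 VcB cleB
        unfolding e by (auto simp: Ec_def P_def)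
    qed
  qed
  have "graph_iso (gr B Vc Ec P b k) M"
    unfolding graph_iso_def verts_gr using bij edges_ok by (auto simp: V_def E_def)
  moreover have "finite Vc" "Vc \<subseteq> {..<B}" "Ec \<subseteq> Vc \<times> Vc" "P \<subseteq> Vc" "sym Ec" "irrefl Ec"
    using cleB symE irrE by (auto simp: Vc_def Ec_def P_def sym_def irrefl_def)
  ultimately show ?thesis unfolding k_def by blast
qed


lemma bound:
  assumes her: "hereditary F" and st: "\<forall>G\<in>F. n0 \<le> card (verts G) \<longrightarrow> s_star s G"
  shows "\<exists>N. \<forall>M. is_graph M \<and> M \<notin> F \<and> (\<forall>S. S \<subseteq> verts M \<and> S \<noteq> verts M \<longrightarrow> induced M S \<in> F)
     \<longrightarrow> card (verts M) \<le> N"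
proof -
  define B where "B = 2*s+2"
  define Sig where "Sig = Pow {..<B} \<times> Pow ({..<B} \<times> {..<B}) \<times> Pow {..<B} \<times> (UNIV :: bool set)"
  have finSig: "finite Sig" unfolding Sig_def by simp
  define thr where "thr = (\<lambda>(Vc, Ec, P, b). if \<exists>k. gr B Vc Ec P b k \<notin> F
      then (LEAST k. gr B Vc Ec P b k \<notin> F) else 0)"
  define N where "N = n0 + B + 2 + sum thr Sig"
  show ?thesis
  proof (intro exI allI impI)
    fix M assume M: "is_graph M \<and> M \<notin> F \<and> (\<forall>S. S \<subseteq> verts M \<and> S \<noteq> verts M \<longrightarrow> induced M S \<in> F)"
    show "card (verts M) \<le> N"
    proof (rule ccontr)
      assume big: "\<not> card (verts M) \<le> N"
      have g: "is_graph M" and nM: "M \<notin> F"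
        and min: "\<forall>S. S \<subseteq> verts M \<and> S \<noteq> verts M \<longrightarrow> induced M S \<in> F" using M by auto
      have fin: "finite (verts M)" using g by (simp add: is_graph_def)
      obtain T where T: "T \<subseteq> verts M" "crown M T" "card (verts M - T) \<le> B"
        using crown_exists[OF g min st] big unfolding N_def B_def by force
      have Tne: "T \<noteq> {}" using T(3) big unfolding N_def by auto
      define k where "k = card T"
      obtain Vc Ec P b where cs: "finite Vc" "Vc \<subseteq> {..<B}" "Ec \<subseteq> Vc \<times> Vc" "P \<subseteq> Vc" "sym Ec"
          "irrefl Ec" and iso: "graph_iso (gr B Vc Ec P b k) M"
        using canon[OF g T(2) T(1) Tne T(3)] unfolding k_def by blast
      have gG: "is_graph (gr B Vc Ec P b j)" for j using is_graph_gr[OF cs] .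
      have nk: "gr B Vc Ec P b k \<notin> F" using closure[OF her _ iso g] nM by blast
      define j where "j = (LEAST k. gr B Vc Ec P b k \<notin> F)"
      have thrj: "thr (Vc, Ec, P, b) = j" using nk unfolding thr_def j_def by auto
      have nj: "gr B Vc Ec P b j \<notin> F" unfolding j_def using nk by (rule LeastI)
      have jk: "j \<le> k" unfolding j_def using nk by (rule Least_le)
      have "\<not> j < k"
      proof
        assume jk': "j < k"
        let ?S = "Vc \<union> {B..<B+j}"
        have "B + j \<in> verts (gr B Vc Ec P b k) - ?S" using jk' cs(2) by (auto simp: verts_gr)
        then have Ssub: "?S \<subset> verts (gr B Vc Ec P b k)" by (auto simp: verts_gr)
        have finG: "finite (verts (gr B Vc Ec P b k))" using cs(1) by (simp add: verts_gr)
        obtain S' where S': "S' \<subseteq> verts M" "card S' = card ?S"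
          "card (verts M) = card (verts (gr B Vc Ec P b k))"
          "graph_iso (induced (gr B Vc Ec P b k) ?S) (induced M S')"
          using iso_induced[OF iso _ finG] Ssub by blast
        have "card ?S < card (verts (gr B Vc Ec P b k))" using Ssub finG by (metis psubset_card_mono)
        then have "S' \<noteq> verts M" using S' by auto
        then have "induced M S' \<in> F" using min S'(1) by blast
        moreover have "graph_iso (induced M S') (gr B Vc Ec P b j)"
          using graph_iso_sym[OF S'(4)] induced_gr[OF cs(2,3,4) less_imp_le[OF jk']] by simp
        ultimately have "gr B Vc Ec P b j \<in> F" using closure[OF her _ _ gG] by blast
        then show False using nj by simp
      qed
      then have "k \<le> thr (Vc, Ec, P, b)" using thrj by simp
      also have "\<dots> \<le> sum thr Sig"
        using cs by (intro member_le_sum finSig) (auto simp: Sig_def)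
      finally have kle: "k \<le> sum thr Sig" .
      have "card (verts M) = card (verts M - T) + k"
        using T(1) fin card_Diff_subset[of T "verts M"] card_mono[OF fin T(1)] finite_subset[OF T(1) fin]
        unfolding k_def by simp
      then show False using kle T(3) big unfolding N_def by simp
    qed
  qed
qed

theorem corollary4p2:
  assumes "hereditary F" and "star_like F"
  shows "\<exists>\<H>. finite \<H> \<and> (\<forall>H\<in>\<H>. is_graph H) \<and> F = Forb \<H>"
proof -
  obtain s n0 where st: "\<forall>G\<in>F. n0 \<le> card (verts G) \<longrightarrow> s_star s G"
    using assms(2) unfolding star_like_def s_star_like_def by blast
  obtain N where N: "\<And>M. is_graph M \<Longrightarrow> M \<notin> F \<Longrightarrow>
      (\<forall>S. S \<subseteq> verts M \<and> S \<noteq> verts M \<longrightarrow> induced M S \<in> F) \<Longrightarrow> card (verts M) \<le> N"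
    using bound[OF assms(1) st] by blast
  define HH where "HH = {H. is_graph H \<and> verts H \<subseteq> {0..<N} \<and> H \<notin> F}"
  have "HH \<subseteq> Pow {0..<N} \<times> Pow ({0..<N} \<times> {0..<N})"
  proof
    fix H assume "H \<in> HH"
    then show "H \<in> Pow {0..<N} \<times> Pow ({0..<N} \<times> {0..<N})"
    proof -
      have "verts H \<subseteq> {0..<N}" "edges H \<subseteq> verts H \<times> verts H"
        using \<open>H \<in> HH\<close> unfolding HH_def is_graph_def by auto
      then have "fst H \<subseteq> {0..<N}" "snd H \<subseteq> {0..<N} \<times> {0..<N}"
        unfolding verts_def edges_def by auto
      then show ?thesis by (simp add: mem_Times_iff)
    qed
  qed
  then have finH: "finite HH" by (rule finite_subset) simp
  have "F = Forb HH"
  proof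
    show "F \<subseteq> Forb HH"
    proof
      fix G assume G: "G \<in> F"
      have gG: "is_graph G" using G assms(1) by (simp add: hereditary_def)
      have "\<not> has_induced G H" if "H \<in> HH" for H
      proof
        assume "has_induced G H"
        then obtain S where S: "S \<subseteq> verts G" "graph_iso H (induced G S)"
          unfolding has_induced_def by blast
        have "induced G S \<in> F" using G S(1) assms(1) by (simp add: hereditary_def)
        then have "H \<in> F" using closure[OF assms(1) _ graph_iso_sym[OF S(2)]] that
          by (simp add: HH_def)
        then show False using that by (simp add: HH_def)
      qed
      then show "G \<in> Forb HH" using gG by (auto simp: Forb_def)
    qed
  next
    show "Forb HH \<subseteq> F"
    proof
      fix G assume G: "G \<in> Forb HH"
      have gG: "is_graph G" using G by (simp add: Forb_def)
      show "G \<in> F"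
      proof (rule ccontr)
        assume nG: "G \<notin> F"
        let ?P = "\<lambda>S. S \<subseteq> verts G \<and> induced G S \<notin> F"
        have "?P (verts G)" using nG induced_self[OF gG] by simp
        then obtain S where S: "?P S" and Smin: "\<forall>S'. ?P S' \<longrightarrow> card S \<le> card S'"
          using ex_has_least_nat[of ?P "verts G" card] by blast
        have finS: "finite S" using S gG by (auto simp: is_graph_def intro: finite_subset)
        let ?M = "induced G S"
        have gM: "is_graph ?M" using is_graph_induced[OF gG] S by simp
        have "\<forall>S'. S' \<subseteq> verts ?M \<and> S' \<noteq> verts ?M \<longrightarrow> induced ?M S' \<in> F"
        proof (intro allI impI)
          fix S' assume "S' \<subseteq> verts ?M \<and> S' \<noteq> verts ?M"
          then have "S' \<subset> S" by auto
          then have "card S' < card S" using finS by (metis psubset_card_mono)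
          moreover have "S' \<subseteq> verts G" using S \<open>S' \<subset> S\<close> by blast
          ultimately have "induced G S' \<in> F" using Smin by (meson not_le)
          then show "induced ?M S' \<in> F" using \<open>S' \<subset> S\<close> by simp
        qed
        then have "card (verts ?M) \<le> N" using N[OF gM] S by simp
        then obtain H where H: "is_graph H" "verts H \<subseteq> {0..<N}" "graph_iso H ?M"
          using relabel[OF gM] by blast
        have "H \<notin> F" using closure[OF assms(1) _ H(3) gM] S by blast
        then have "H \<in> HH" using H by (simp add: HH_def)
        moreover have "has_induced G H" using S H(3) by (auto simp: has_induced_def)
        ultimately show False using G by (auto simp: Forb_def)
      qed
    qed
  qed
  then show ?thesis using finH by (auto simp: HH_def)
qed

end
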